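(* Let $\mathcal N$ be a monotone BAN of size $n$ and $x\to y$ a synchronous transition of $\mathcal N$. If there is no $x$-critical cycle of $\mathcal N$ whose node set is contained in $D(x,y)$, then there is a derivation from $x$ to $y$ consisting only of asynchronous transitions (i.e. $x\to^*_{a} y$). Consequently, if for some $m\ge2$ the network $\mathcal N$ has no critical cycle with at most $m$ distinct nodes, then every transition of size at most $m$ can be decomposed into a derivation of asynchronous transitions.
   Context: Let $n\ge 1$, $V=\{0,\dots,n-1\}$, $\mathbb B=\{0,1\}$; $\bar x^{i}$ is $x$ with coordinate $i$ negated; $D(x,y)=\{i:x_i\ne y_i\}$, $d(x,y)=|D(x,y)|$; $\mathbf s(1)=1,\mathbf s(0)=-1$. A BAN of size $n$ is a family $(f_i)_{i\in V}$, $f_i:\mathbb B^n\to\mathbb B$; monotone if for all $i,j$, either $\mathbf s(x_j)(f_i(x)-f_i(\bar x^{j}))\ge0$ for all $x$, or $\le0$ for all $x$. Structure $G=(V,A)$, $A=\{(j,i):\exists x,\ f_i(x)\ne f_i(\bar x^j)\}$; $\mathrm{sign}(j,i)=\mathbf s(x_j)(f_i(x)-f_i(\bar x^j))\in\{\pm1\}$ for any $x$ with $f_i(x)\ne f_i(\bar x^j)$. $U(x)=\{i:f_i(x)\ne x_i\}$; $\mathrm{FRUS}(x)=\{(j,i)\in A:\mathbf s(x_j)\mathbf s(x_i)=-\mathrm{sign}(j,i)\}$. A transition is a pair $(x,y)$ with $\emptyset\ne D(x,y)\subseteq U(x)$, written $x\to y$, of size $d(x,y)$; asynchronous if of size 1,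 synchronous if of size $\ge2$. A derivation is a finite sequence $x^0\to x^1\to\dots\to x^k$ ($k\ge1$) of transitions; $x\to^*_a y$ means there is a derivation from $x$ to $y$ made of asynchronous transitions. A cycle of $\mathcal N$ is a subgraph $(V_C,A_C)$ of $G$ made of the nodes and arcs of a closed directed walk with no repeated arcs (nodes may repeat); it is $x$-critical if $V_C\subseteq U(x)$ and $A_C\subseteq\mathrm{FRUS}(x)$, and critical if $x$-critical for some $x$. *)

theory Defs
  imports Main
begin

text \<open>A BAN of size n: node set V is the finite type 'n (n = CARD('n) \<ge> 1);
configurations are x :: 'n \<Rightarrow> bool; f i is the local function of node i.\<close>

type_synonym 'n ban = "'n \<Rightarrow> ('n \<Rightarrow> bool) \<Rightarrow> bool"

definition flip :: "('n \<Rightarrow> bool) \<Rightarrow> 'n \<Rightarrow> ('n \<Rightarrow> bool)" where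
  "flip x j = x(j := \<not> x j)"

definition Dset :: "('n \<Rightarrow> bool) \<Rightarrow> ('n \<Rightarrow> bool) \<Rightarrow> 'n set" where
  "Dset x y = {i. x i \<noteq> y i}"

definition sgnb :: "bool \<Rightarrow> int" where
  "sgnb b = (if b then 1 else -1)"

definition delta :: "'n ban \<Rightarrow> 'n \<Rightarrow> 'n \<Rightarrow> ('n \<Rightarrow> bool) \<Rightarrow> int" where
  "delta f j i x = sgnb (x j) * (of_bool (f i x) - of_bool (f i (flip x j)))"

definition monotone_ban :: "'n ban \<Rightarrow> bool" where
  "monotone_ban f \<longleftrightarrow> (\<forall>i j. (\<forall>x. delta f j i x \<ge> 0) \<or> (\<forall>x. delta f j i x \<le> 0))"

definition arcs :: "'n ban \<Rightarrow> ('n \<times> 'n) set" where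
  "arcs f = {(j, i). \<exists>x. f i x \<noteq> f i (flip x j)}"

definition arc_sign :: "'n ban \<Rightarrow> 'n \<Rightarrow> 'n \<Rightarrow> int" where
  "arc_sign f j i = delta f j i (SOME x. f i x \<noteq> f i (flip x j))"

definition Uset :: "'n ban \<Rightarrow> ('n \<Rightarrow> bool) \<Rightarrow> 'n set" where
  "Uset f x = {i. f i x \<noteq> x i}"

definition FRUS :: "'n ban \<Rightarrow> ('n \<Rightarrow> bool) \<Rightarrow> ('n \<times> 'n) set" where
  "FRUS f x = {(j, i) \<in> arcs f. sgnb (x j) * sgnb (x i) = - arc_sign f j i}"

definition transition :: "'n ban \<Rightarrow> ('n \<Rightarrow> bool) \<Rightarrow> ('n \<Rightarrow> bool) \<Rightarrow> bool" where
  "transition f x y \<longleftrightarrow> Dset x y \<noteq> {} \<and> Dset x y \<subseteq> Uset f x"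

definition async_transition :: "'n ban \<Rightarrow> ('n \<Rightarrow> bool) \<Rightarrow> ('n \<Rightarrow> bool) \<Rightarrow> bool" where
  "async_transition f x y \<longleftrightarrow> transition f x y \<and> card (Dset x y) = 1"

definition sync_transition :: "'n ban \<Rightarrow> ('n \<Rightarrow> bool) \<Rightarrow> ('n \<Rightarrow> bool) \<Rightarrow> bool" where
  "sync_transition f x y \<longleftrightarrow> transition f x y \<and> card (Dset x y) \<ge> 2"

text \<open>x \<rightarrow>*_a y: a derivation (k \<ge> 1 steps) of asynchronous transitions.\<close>
definition async_derivable :: "'n ban \<Rightarrow> ('n \<Rightarrow> bool) \<Rightarrow> ('n \<Rightarrow> bool) \<Rightarrow> bool" where
  "async_derivable f x y \<longleftrightarrow> (async_transition f)\<^sup>+\<^sup>+ x y"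

text \<open>A closed directed walk with no repeated arcs, given as its list of arcs.\<close>
definition closed_trail :: "'n ban \<Rightarrow> ('n \<times> 'n) list \<Rightarrow> bool" where
  "closed_trail f es \<longleftrightarrow> es \<noteq> [] \<and> distinct es \<and> set es \<subseteq> arcs f
     \<and> (\<forall>t. Suc t < length es \<longrightarrow> snd (es ! t) = fst (es ! Suc t))
     \<and> snd (last es) = fst (hd es)"

definition is_cycle :: "'n ban \<Rightarrow> 'n set \<Rightarrow> ('n \<times> 'n) set \<Rightarrow> bool" where
  "is_cycle f VC AC \<longleftrightarrow> (\<exists>es. closed_trail f es \<and> AC = set es
     \<and> VC = fst ` set es \<union> snd ` set es)"

definition critical_at :: "'n ban \<Rightarrow> ('n \<Rightarrow> bool) \<Rightarrow> 'n set \<Rightarrow> ('n \<times> 'n) set \<Rightarrow> bool" where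
  "critical_at f x VC AC \<longleftrightarrow> is_cycle f VC AC \<and> VC \<subseteq> Uset f x \<and> AC \<subseteq> FRUS f x"

definition critical :: "'n ban \<Rightarrow> 'n set \<Rightarrow> ('n \<times> 'n) set \<Rightarrow> bool" where
  "critical f VC AC \<longleftrightarrow> (\<exists>x. critical_at f x VC AC)"

end

theory Submission
  imports Defs
begin

lemma delta_x:
  "f j x \<noteq> x j \<Longrightarrow> f j (flip x i) = x j \<Longrightarrow> delta f i j x = - sgnb (x i) * sgnb (x j)"
  unfolding delta_def sgnb_def by (cases "x i"; cases "x j") auto

lemma delta_pm: "f j z \<noteq> f j (flip z i) \<Longrightarrow> delta f i j z = 1 \<or> delta f i j z = -1"
  unfolding delta_def sgnb_def by (cases "z i"; cases "f j z") auto

lemma arc_sign_eq: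
  assumes m: "monotone_ban f" and h: "f j x \<noteq> f j (flip x i)"
  shows "arc_sign f i j = delta f i j x"
proof -
  define z where "z = (SOME z. f j z \<noteq> f j (flip z i))"
  have hz: "f j z \<noteq> f j (flip z i)" unfolding z_def by (rule someI[of _ x]) (rule h)
  have a: "arc_sign f i j = delta f i j z" unfolding arc_sign_def z_def by simp
  from m have "(\<forall>x. delta f i j x \<ge> 0) \<or> (\<forall>x. delta f i j x \<le> 0)"
    unfolding monotone_ban_def by blast
  then have "(0 \<le> delta f i j x \<and> 0 \<le> delta f i j z) \<or> (delta f i j x \<le> 0 \<and> delta f i j z \<le> 0)"
    by blast
  then show ?thesis using delta_pm[of f j z i, OF hz] delta_pm[of f j x i, OF h] a by linarith
qed

lemma frus:
  assumes m: "monotone_ban f" and h1: "f j x \<noteq> x j" and h2: "f j (flip x i) = x j"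
  shows "(i, j) \<in> FRUS f x"
proof -
  have ne: "f j x \<noteq> f j (flip x i)" using h1 h2 by auto
  have ar: "(i, j) \<in> arcs f" unfolding arcs_def using ne by blast
  have "arc_sign f i j = - sgnb (x i) * sgnb (x j)"
    using arc_sign_eq[OF m ne] delta_x[of f j x i, OF h1 h2] by simp
  then show ?thesis unfolding FRUS_def using ar by simp
qed

lemma find_cycle:
  fixes D :: "'a set"
  assumes fin: "finite D" and ne: "D \<noteq> {}" and succ: "\<forall>i\<in>D. \<exists>j\<in>D. R i j"
  shows "\<exists>a b p. a < b \<and> p a = p b \<and> (\<forall>k. R (p k) (p (Suc k))) \<and> (\<forall>k. p k \<in> D)
           \<and> (\<forall>s t. a \<le> s \<longrightarrow> s < t \<longrightarrow> t < b \<longrightarrow> p s \<noteq> p t)"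
proof -
  obtain g where g: "\<forall>i\<in>D. g i \<in> D \<and> R i (g i)" using succ by metis
  obtain i0 where i0: "i0 \<in> D" using ne by blast
  define p where "p k = (g ^^ k) i0" for k
  have pD: "p k \<in> D" for k unfolding p_def by (induction k) (use i0 g in auto)
  have pR: "R (p k) (p (Suc k))" for k using g pD[of k] unfolding p_def by auto
  have "\<not> inj_on p {..card D}"
  proof
    assume "inj_on p {..card D}"
    then have "card (p ` {..card D}) = Suc (card D)" by (simp add: card_image)
    moreover have "card (p ` {..card D}) \<le> card D"
      using pD fin by (intro card_mono) auto
    ultimately show False by simp
  qed
  then obtain a0 b0 where "a0 \<noteq> b0" "p a0 = p b0" unfolding inj_on_def by blast
  then have ex: "\<exists>b a. a < b \<and> p a = p b"
    by (metis linorder_neqE_nat)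
  define b where "b = (LEAST b. \<exists>a. a < b \<and> p a = p b)"
  have "\<exists>a. a < b \<and> p a = p b" unfolding b_def using ex by (rule LeastI_ex)
  then obtain a where ab: "a < b" "p a = p b" by blast
  have dist: "\<forall>s t. a \<le> s \<longrightarrow> s < t \<longrightarrow> t < b \<longrightarrow> p s \<noteq> p t"
  proof (intro allI impI)
    fix s t assume "a \<le> s" "s < t" "t < b"
    show "p s \<noteq> p t"
    proof
      assume "p s = p t"
      then have "b \<le> t" unfolding b_def using \<open>s < t\<close> by (intro Least_le) blast
      then show False using \<open>t < b\<close> by simp
    qed
  qed
  show ?thesis using ab pR pD dist by blast
qed

lemma cycle_from_succ:
  fixes f :: "'n::finite ban"
  assumes m: "monotone_ban f" and DU: "D \<subseteq> Uset f x" and ne: "D \<noteq> {}"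
    and succ: "\<forall>i\<in>D. \<exists>j\<in>D. i \<noteq> j \<and> f j (flip x i) = x j"
  shows "\<exists>VC AC. critical_at f x VC AC \<and> VC \<subseteq> D"
proof -
  have fin: "finite D" by simp
  obtain a b p where ab: "a < b" "p a = p b"
    and pR: "\<forall>k. p k \<noteq> p (Suc k) \<and> f (p (Suc k)) (flip x (p k)) = x (p (Suc k))"
    and pD: "\<forall>k. p k \<in> D"
    and dist: "\<forall>s t. a \<le> s \<longrightarrow> s < t \<longrightarrow> t < b \<longrightarrow> p s \<noteq> p t"
    using find_cycle[OF fin ne, of "\<lambda>i j. i \<noteq> j \<and> f j (flip x i) = x j"] succ by blast
  define es where "es = map (\<lambda>k. (p k, p (Suc k))) [a..<b]"
  have len: "length es = b - a" unfolding es_def by simp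
  have nth: "t < b - a \<Longrightarrow> es ! t = (p (a + t), p (Suc (a + t)))" for t
    unfolding es_def by simp
  have inj: "inj_on (\<lambda>k. (p k, p (Suc k))) {a..<b}"
    unfolding inj_on_def using dist by (metis atLeastLessThan_iff linorder_neqE_nat prod.inject)
  have distinct: "distinct es" unfolding es_def using inj by (simp add: distinct_map)
  have setes: "set es = (\<lambda>k. (p k, p (Suc k))) ` {a..<b}" unfolding es_def by simp
  have U: "f (p k) x \<noteq> x (p k)" for k using pD DU unfolding Uset_def by blast
  have F: "set es \<subseteq> FRUS f x"
    unfolding setes using frus[OF m U] pR by blast
  have A: "set es \<subseteq> arcs f" using F unfolding FRUS_def by blast
  have nemp: "es \<noteq> []" using len ab by auto
  have cons: "\<forall>t. Suc t < length es \<longrightarrow> snd (es ! t) = fst (es ! Suc t)"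
    using nth len by simp
  have "last es = es ! (b - a - 1)" using nemp len by (simp add: last_conv_nth)
  then have l: "snd (last es) = p b" using nth[of "b - a - 1"] ab by simp
  have "hd es = es ! 0" using nemp by (simp add: hd_conv_nth)
  then have h: "fst (hd es) = p a" using nth[of 0] ab by simp
  have ct: "closed_trail f es" unfolding closed_trail_def
    using nemp distinct A cons l h ab by simp
  define VC where "VC = fst ` set es \<union> snd ` set es"
  have VCD: "VC \<subseteq> D" unfolding VC_def setes using pD by auto
  have "critical_at f x VC (set es)"
    unfolding critical_at_def is_cycle_def using ct VC_def VCD DU F by blast
  then show ?thesis using VCD by blast
qed

lemma main1:
  fixes f :: "'n::finite ban"
  assumes m: "monotone_ban f"
  shows "\<forall>x. card (Dset x y) = n \<longrightarrow> transition f x y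
            \<longrightarrow> \<not> (\<exists>VC AC. critical_at f x VC AC \<and> VC \<subseteq> Dset x y)
            \<longrightarrow> async_derivable f x y"
proof (induction n rule: less_induct)
  case (less n)
  show ?case
  proof (intro allI impI)
    fix x assume c: "card (Dset x y) = n" and tr: "transition f x y"
      and nc: "\<not> (\<exists>VC AC. critical_at f x VC AC \<and> VC \<subseteq> Dset x y)"
    define D where "D = Dset x y"
    have DU: "D \<subseteq> Uset f x" and Dne: "D \<noteq> {}" using tr unfolding transition_def D_def by auto
    have finD: "finite D" by simp
    show "async_derivable f x y"
    proof (cases "n = 1")
      case True
      then show ?thesis using tr c unfolding async_derivable_def async_transition_def by auto
    next
      case False
      have n2: "card D \<ge> 2"
      proof -
        have "card D \<noteq> 0" using Dne finD by simp
        then show ?thesis using False c unfolding D_def by linarith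
      qed
      obtain i where iD: "i \<in> D" and nosucc: "\<forall>j\<in>D. i \<noteq> j \<longrightarrow> f j (flip x i) \<noteq> x j"
        using cycle_from_succ[OF m DU Dne] nc unfolding D_def by blast
      define x' where "x' = flip x i"
      have Dxx': "Dset x x' = {i}" unfolding Dset_def x'_def flip_def by auto
      have as: "async_transition f x x'"
        unfolding async_transition_def transition_def using Dxx' iD DU by auto
      have Dx'y: "Dset x' y = D - {i}"
        unfolding D_def Dset_def x'_def flip_def using iD unfolding D_def Dset_def by auto
      have cx': "card (Dset x' y) < n" using Dx'y iD c finD unfolding D_def
        by (metis D_def card_Diff1_less)
      have tr': "transition f x' y" unfolding transition_def Uset_def
      proof
        have "card (D - {i}) \<ge> 1" using n2 iD finD by simp
        then show "Dset x' y \<noteq> {}" using Dx'y by (metis card.empty not_one_le_zero)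
      next
        show "Dset x' y \<subseteq> {i. f i x' \<noteq> x' i}"
        proof
          fix j assume "j \<in> Dset x' y"
          then have j: "j \<in> D" "j \<noteq> i" using Dx'y by auto
          then show "j \<in> {i. f i x' \<noteq> x' i}" using nosucc unfolding x'_def flip_def by auto
        qed
      qed
      have nc': "\<not> (\<exists>VC AC. critical_at f x' VC AC \<and> VC \<subseteq> Dset x' y)"
      proof
        assume "\<exists>VC AC. critical_at f x' VC AC \<and> VC \<subseteq> Dset x' y"
        then obtain VC AC where cr: "critical_at f x' VC AC" and sub: "VC \<subseteq> D - {i}"
          using Dx'y by auto
        obtain es where es: "closed_trail f es" "AC = set es" "VC = fst ` set es \<union> snd ` set es"
          using cr unfolding critical_at_def is_cycle_def by blast
        have ends: "(a, b) \<in> AC \<Longrightarrow> a \<in> VC \<and> b \<in> VC" for a b using es by force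
        have same: "k \<in> VC \<Longrightarrow> x' k = x k" for k using sub unfolding x'_def flip_def by auto
        have "AC \<subseteq> FRUS f x"
        proof
          fix e assume e: "e \<in> AC"
          obtain a b where [simp]: "e = (a, b)" by fastforce
          have "e \<in> FRUS f x'" using cr e unfolding critical_at_def by blast
          then show "e \<in> FRUS f x" using ends[of a b] e same unfolding FRUS_def by auto
        qed
        then have "critical_at f x VC AC" using cr sub DU unfolding critical_at_def by auto
        then show False using nc sub unfolding D_def by blast
      qed
      have "async_derivable f x' y" using less.IH[OF cx'] tr' nc' by blast
      then show ?thesis using as unfolding async_derivable_def by (meson tranclp.r_into_trancl tranclp_trans)
    qed
  qed
qed

theorem mainTheorem5:
  fixes f :: "'n::finite ban"
  assumes "monotone_ban f"
  shows "(\<forall>x y. sync_transition f x y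
            \<longrightarrow> \<not> (\<exists>VC AC. critical_at f x VC AC \<and> VC \<subseteq> Dset x y)
            \<longrightarrow> async_derivable f x y)
       \<and> (\<forall>m::nat. m \<ge> 2
            \<longrightarrow> \<not> (\<exists>VC AC. critical f VC AC \<and> card VC \<le> m)
            \<longrightarrow> (\<forall>x y. transition f x y \<and> card (Dset x y) \<le> m \<longrightarrow> async_derivable f x y))"
proof
  have P: "transition f x y \<Longrightarrow> \<not> (\<exists>VC AC. critical_at f x VC AC \<and> VC \<subseteq> Dset x y)
            \<Longrightarrow> async_derivable f x y" for x y
    using main1[OF assms, of y "card (Dset x y)"] by blast
  show "\<forall>x y. sync_transition f x y
            \<longrightarrow> \<not> (\<exists>VC AC. critical_at f x VC AC \<and> VC \<subseteq> Dset x y)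
            \<longrightarrow> async_derivable f x y" using P unfolding sync_transition_def by blast
  show "\<forall>m::nat. m \<ge> 2
            \<longrightarrow> \<not> (\<exists>VC AC. critical f VC AC \<and> card VC \<le> m)
            \<longrightarrow> (\<forall>x y. transition f x y \<and> card (Dset x y) \<le> m \<longrightarrow> async_derivable f x y)"
  proof (intro allI impI, elim conjE)
    fix m x y assume nc: "\<not> (\<exists>VC AC. critical f VC AC \<and> card VC \<le> m)"
      and tr: "transition f x y" and cm: "card (Dset x y) \<le> m"
    have "\<not> (\<exists>VC AC. critical_at f x VC AC \<and> VC \<subseteq> Dset x y)"
    proof
      assume "\<exists>VC AC. critical_at f x VC AC \<and> VC \<subseteq> Dset x y"
      then obtain VC AC where "critical_at f x VC AC" "VC \<subseteq> Dset x y" by blast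
      moreover have "card VC \<le> card (Dset x y)" using calculation(2) by (simp add: card_mono)
      ultimately show False using nc cm unfolding critical_def by (meson order_trans)
    qed
    then show "async_derivable f x y" using P tr by blast
  qed
qed

end
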